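(* Let $\mathsf{X}\in\mathbb{R}^{n\times r}$ have unit-norm columns and rank $r$. Let $Y$ be the random subset associated with $|\mathrm{columns}(\mathsf{X})\rangle$. Then for every $\mathtt{C}\subseteq\{1,\dots,n\}$, $$\mathbb{P}(Y=\mathtt{C})=\det\begin{bmatrix}0_{|\mathtt{C}|}&\mathsf{X}_{\mathtt{C}:}\\-(\mathsf{X}_{\mathtt{C}:})^\top&\mathrm{skew}(\mathsf{X}^\top\mathsf{X})\end{bmatrix}.$$ For $\mathtt{C}=\emptyset$ the matrix is understood as $\mathrm{skew}(\mathsf{X}^\top\mathsf{X})$. In particular, $\mathbb{P}\big(\mathrm{parity}(|Y|)\neq\mathrm{parity}(r)\big)=0$.
   Context: Work in $(\mathbb{C}^2)^{\otimes n}$ with $c_j=\sigma_z^{\otimes(j-1)}\otimes|0\rangle\langle1|\otimes I^{\otimes(n-j)}$ and $|\emptyset\rangle=|0\cdots0\rangle$. For a unit $x\in\mathbb{R}^n$, set $\mathcal{C}(x)=\sum_ix_i(c_i+c_i^* )$. Put $|\mathrm{columns}(\mathsf{X})\rangle=\mathcal{C}(\mathsf{X}_{:1})\cdots\mathcal{C}(\mathsf{X}_{:r})|\emptyset\rangle$; the order of the columns matters. The random subset $Y$ has law $\mathbb{P}(Y=\mathtt{C})=|\langle e_{\mathtt{C}}|\mathrm{columns}(\mathsf{X})\rangle|^2$, where $|e_{\mathtt{C}}\rangle=|b_1\dots b_n\rangle$ with $b_i=1$ iff $i\in\mathtt{C}$ (measurement of the occupation numbers $c_i^*c_i$). For a square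 matrix $M$, $\mathrm{triu}(M)$ is its upper-triangular part and $\mathrm{skew}(M)=\mathrm{triu}(M)-\mathrm{triu}(M)^\top$. $\mathsf{X}_{\mathtt{C}:}$ is the submatrix of rows indexed by $\mathtt{C}$ in increasing order, and $0_m$ is the $m\times m$ zero matrix. *)

theory Defs
  imports "Jordan_Normal_Form.DL_Rank" "Jordan_Normal_Form.DL_Submatrix" Complex_Main
begin

text \<open>Computational basis of (C^2)^{tensor n}: bit strings of length n
  (False = |0>, True = |1>). Operators are given by their matrix entries
  M b' b = <b'|M|b>, states by their coefficients v b = <b|v>.
  Qubits/sites are indexed 0..n-1 (paper: 1..n).\<close>

type_synonym qstate = "bool list \<Rightarrow> complex"
type_synonym qop = "bool list \<Rightarrow> bool list \<Rightarrow> complex"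
type_synonym qubit_op = "bool \<Rightarrow> bool \<Rightarrow> complex"

definition bitstrings :: "nat \<Rightarrow> bool list set" where
  "bitstrings n = {bs. length bs = n}"

definition kron :: "qubit_op list \<Rightarrow> qop" where
  "kron As b' b = (\<Prod>i<length As. (As ! i) (b' ! i) (b ! i))"

definition sigma_z :: qubit_op where
  "sigma_z a b = (if a = b then (if a then -1 else 1) else 0)"

definition ket0bra1 :: qubit_op where
  "ket0bra1 a b = (if \<not> a \<and> b then 1 else 0)"

definition id_qubit :: qubit_op where
  "id_qubit a b = (if a = b then 1 else 0)"

definition ann :: "nat \<Rightarrow> nat \<Rightarrow> qop" where
  "ann n j = kron (replicate j sigma_z @ [ket0bra1] @ replicate (n - j - 1) id_qubit)"

definition adjoint_op :: "qop \<Rightarrow> qop" where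
  "adjoint_op M b' b = cnj (M b b')"

definition apply_op :: "nat \<Rightarrow> qop \<Rightarrow> qstate \<Rightarrow> qstate" where
  "apply_op n M v b' = (\<Sum>b\<in>bitstrings n. M b' b * v b)"

definition majorana_op :: "nat \<Rightarrow> (nat \<Rightarrow> real) \<Rightarrow> qop" where
  "majorana_op n x b' b =
     (\<Sum>i<n. complex_of_real (x i) * (ann n i b' b + adjoint_op (ann n i) b' b))"

definition vacuum :: "nat \<Rightarrow> qstate" where
  "vacuum n b = (if b = replicate n False then 1 else 0)"

text \<open>|columns(X)> = C(X_{:1}) ... C(X_{:r}) |vacuum>  (C(X_{:r}) acts first).\<close>
definition columns_state :: "real mat \<Rightarrow> qstate" where
  "columns_state X =
     foldr (\<lambda>k v. apply_op (dim_row X) (majorana_op (dim_row X) (\<lambda>i. X $$ (i, k))) v)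
           [0..<dim_col X] (vacuum (dim_row X))"

definition basis_of_set :: "nat \<Rightarrow> nat set \<Rightarrow> bool list" where
  "basis_of_set n C = map (\<lambda>i. i \<in> C) [0..<n]"

definition prob_Y :: "real mat \<Rightarrow> nat set \<Rightarrow> real" where
  "prob_Y X C = (cmod (columns_state X (basis_of_set (dim_row X) C)))\<^sup>2"

definition triu :: "'a::zero mat \<Rightarrow> 'a mat" where
  "triu M = mat (dim_row M) (dim_col M) (\<lambda>(i, j). if i \<le> j then M $$ (i, j) else 0)"

definition skew :: "'a::ab_group_add mat \<Rightarrow> 'a mat" where
  "skew M = triu M - transpose_mat (triu M)"

definition block_matrix :: "real mat \<Rightarrow> nat set \<Rightarrow> real mat" where
  "block_matrix X C =
     (let XC = submatrix X C {0..<dim_col X}; m = dim_row XC in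
      four_block_mat (0\<^sub>m m m) XC (- transpose_mat XC) (skew (transpose_mat X * X)))"

end

theory Submission
  imports Defs
begin

fun dl :: "nat \<Rightarrow> 'a list \<Rightarrow> 'a list" where
  "dl _ [] = []"
| "dl 0 (x # xs) = xs"
| "dl (Suc j) (x # xs) = x # dl j xs"

lemma length_dl_le: "length (dl j xs) \<le> length xs"
  by (induction j xs rule: dl.induct) auto

lemma length_dl[simp]: "j < length xs \<Longrightarrow> length (dl j xs) = length xs - 1"
  by (induction j xs rule: dl.induct) auto

lemma nth_dl: "j < length xs \<Longrightarrow> l < length xs - 1 \<Longrightarrow> dl j xs ! l = xs ! (if l < j then l else Suc l)"
proof (induction j xs arbitrary: l rule: dl.induct)
  case (3 j x xs)
  then show ?case by (cases l) auto
qed auto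

lemma set_dl: "set (dl j xs) \<subseteq> set xs"
  by (induction j xs rule: dl.induct) auto

lemma dl_map: "dl j (map f xs) = map f (dl j xs)"
  by (induction j xs rule: dl.induct) auto

lemma dl_append2: "length xs \<le> j \<Longrightarrow> dl j (xs @ ys) = xs @ dl (j - length xs) ys"
proof (induction xs arbitrary: j)
  case (Cons x xs)
  then show ?case by (cases j) auto
qed auto

lemma dl_dl: "j \<le> l \<Longrightarrow> dl l (dl j xs) = dl j (dl (Suc l) xs)"
proof (induction xs arbitrary: j l)
  case (Cons x xs)
  show ?case
  proof (cases j)
    case 0
    then show ?thesis by (cases l) auto
  next
    case (Suc j')
    then obtain l' where "l = Suc l'" using Cons.prems by (cases l) auto
    then show ?thesis using Cons Suc by auto
  qed
qed auto

lemma dl_update: "k < length xs \<Longrightarrow>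
   dl j (xs[k := y]) = (if j = k then dl j xs else (dl j xs)[(if k < j then k else k - 1) := y])"
proof (induction j xs arbitrary: k rule: dl.induct)
  case (2 x xs)
  then show ?case by (cases k) auto
next
  case (3 j x xs)
  then show ?case by (cases k) (auto split: nat.splits)
qed auto

fun swp :: "nat \<Rightarrow> 'a list \<Rightarrow> 'a list" where
  "swp 0 (x # y # zs) = y # x # zs"
| "swp (Suc i) (x # xs) = x # swp i xs"
| "swp _ xs = xs"

lemma length_swp[simp]: "length (swp i xs) = length xs"
  by (induction i xs rule: swp.induct) auto

lemma nth_swp: "Suc i < length xs \<Longrightarrow> j < length xs \<Longrightarrow>
  swp i xs ! j = xs ! (if j = i then Suc i else if j = Suc i then i else j)"
proof (induction i xs arbitrary: j rule: swp.induct)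
  case (1 x y zs)
  then show ?case by (cases j) (auto simp: nth_Cons split: nat.splits)
next
  case (2 i x xs)
  then show ?case by (cases j) auto
qed auto

lemma dl_swp_lt: "Suc i < length xs \<Longrightarrow> j < i \<Longrightarrow> dl j (swp i xs) = swp (i - 1) (dl j xs)"
  by (rule nth_equalityI) (auto simp: nth_dl nth_swp)

lemma dl_swp_gt: "Suc i < length xs \<Longrightarrow> Suc i < j \<Longrightarrow> j < length xs \<Longrightarrow> dl j (swp i xs) = swp i (dl j xs)"
  by (rule nth_equalityI) (auto simp: nth_dl nth_swp)

lemma dl_swp_i: "Suc i < length xs \<Longrightarrow> dl i (swp i xs) = dl (Suc i) xs"
  by (rule nth_equalityI) (auto simp: nth_dl nth_swp less_Suc_eq)

lemma dl_swp_Si: "Suc i < length xs \<Longrightarrow> dl (Suc i) (swp i xs) = dl i xs"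
  by (rule nth_equalityI) (auto simp: nth_dl nth_swp less_Suc_eq)

function pf :: "('a \<Rightarrow> 'a \<Rightarrow> real) \<Rightarrow> 'a list \<Rightarrow> real" where
  "pf f [] = 1"
| "pf f (x # xs) = (\<Sum>j<length xs. (-1)^j * f x (xs ! j) * pf f (dl j xs))"
  by pat_completeness auto
termination
  by (relation "measure (\<lambda>(f, xs). length xs)") (auto simp: le_imp_less_Suc length_dl_le)

fun dt :: "('a \<Rightarrow> 'b \<Rightarrow> real) \<Rightarrow> 'a list \<Rightarrow> 'b list \<Rightarrow> real" where
  "dt f [] cs = 1"
| "dt f (r # rs) cs = (\<Sum>j<length cs. (-1)^j * f r (cs ! j) * dt f rs (dl j cs))"

lemma tri_swap: "(\<Sum>j<m. \<Sum>l<j. h j l) = (\<Sum>l<m. \<Sum>j\<in>{Suc l..<m}. (h j l :: real))"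
proof (induction m)
  case (Suc m)
  have "(\<Sum>l<Suc m. \<Sum>j\<in>{Suc l..<Suc m}. h j l) = (\<Sum>l<m. \<Sum>j\<in>{Suc l..<Suc m}. h j l)"
    by simp
  also have "\<dots> = (\<Sum>l<m. (\<Sum>j\<in>{Suc l..<m}. h j l) + h m l)"
    by (rule sum.cong) (auto simp: sum.atLeastLessThan_Suc)
  finally show ?case using Suc by (simp add: sum.distrib)
qed simp

lemma m1pow: "0 < l \<Longrightarrow> (-1::real)^(l - Suc 0) = - ((-1)^l)"
  by (cases l) auto

lemma dsum:
  fixes a b :: "nat \<Rightarrow> real" and P :: "nat \<Rightarrow> nat \<Rightarrow> real" and m :: nat
  defines "V \<equiv> \<lambda>a b. (\<Sum>j<m. \<Sum>l\<in>{Suc j..<m}. (-1)^(j+l) * a j * b l * P j l)"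
  shows "(\<Sum>j<m. (-1)^j * a j * (\<Sum>l<m-1. (-1)^l * b (if l<j then l else Suc l) *
            P (if l<j then l else j) (if l<j then j else Suc l))) = V b a - V a b"
proof -
  have inner: "(\<Sum>l<m-1. (-1)^l * b (if l<j then l else Suc l) *
            P (if l<j then l else j) (if l<j then j else Suc l))
     = (\<Sum>l<j. (-1)^l * b l * P l j) - (\<Sum>l\<in>{Suc j..<m}. (-1)^l * b l * P j l)" if j: "j < m" for j
  proof -
    let ?g = "\<lambda>l. (-1)^l * b (if l<j then l else Suc l) *
            P (if l<j then l else j) (if l<j then j else Suc l) :: real"
    have "(\<Sum>l<m-1. ?g l) = (\<Sum>l\<in>{0..<j}. ?g l) + (\<Sum>l\<in>{j..<m-1}. ?g l)"
    proof -
      have "{..<m-1} = {0..<j} \<union> {j..<m-1}" using j by auto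
      then show ?thesis by (simp only:) (rule sum.union_disjoint; auto)
    qed
    also have "(\<Sum>l\<in>{0..<j}. ?g l) = (\<Sum>l<j. (-1)^l * b l * P l j)"
      by (simp add: atLeast0LessThan)
    also have "(\<Sum>l\<in>{j..<m-1}. ?g l) = (\<Sum>l\<in>{j..<m-1}. (-1)^l * b (Suc l) * P j (Suc l))"
      by (rule sum.cong) auto
    also have "\<dots> = (\<Sum>l\<in>{Suc j..<Suc (m-1)}. (-1)^(l-1) * b l * P j l)"
      unfolding sum.shift_bounds_Suc_ivl by simp
    also have "\<dots> = - (\<Sum>l\<in>{Suc j..<m}. (-1)^l * b l * P j l)"
    proof -
      have "Suc (m-1) = m" using j by simp
      then show ?thesis unfolding sum_negf[symmetric]
        by (auto intro!: sum.cong simp: m1pow)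
    qed
    finally show ?thesis by simp
  qed
  have "(\<Sum>j<m. (-1)^j * a j * (\<Sum>l<m-1. (-1)^l * b (if l<j then l else Suc l) *
            P (if l<j then l else j) (if l<j then j else Suc l)))
      = (\<Sum>j<m. (-1)^j * a j * ((\<Sum>l<j. (-1)^l * b l * P l j) - (\<Sum>l\<in>{Suc j..<m}. (-1)^l * b l * P j l)))"
    by (rule sum.cong[OF refl], subst inner, auto)
  also have "\<dots> = (\<Sum>j<m. \<Sum>l<j. (-1)^(j+l) * a j * b l * P l j) - V a b"
    unfolding V_def by (simp add: sum_subtractf sum_distrib_left right_diff_distrib power_add mult_ac)
  also have "(\<Sum>j<m. \<Sum>l<j. (-1)^(j+l) * a j * b l * P l j) = V b a"
    unfolding V_def tri_swap by (simp add: mult_ac add.commute)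
  finally show ?thesis .
qed

lemma pf_swap0:
  assumes sk: "\<forall>a b. f a b = - f b a"
  shows "pf f (y # x # zs) = - pf f (x # y # zs)"
proof -
  define m where "m = length zs"
  define P where "P = (\<lambda>p q. pf f (dl p (dl q zs)))"
  define Vf where "Vf = (\<lambda>a b. (\<Sum>j<m. \<Sum>l\<in>{Suc j..<m}. (-1)^(j+l) * a j * b l * P j l :: real))"
  have e: "pf f (u # v # zs) = f u v * pf f zs
     - (Vf (\<lambda>j. f v (zs!j)) (\<lambda>j. f u (zs!j)) - Vf (\<lambda>j. f u (zs!j)) (\<lambda>j. f v (zs!j)))" for u v
  proof -
    have "pf f (u # v # zs) = f u v * pf f zs +
       (\<Sum>j<m. (-1)^(Suc j) * f u (zs ! j) * pf f (v # dl j zs))"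
      by (subst pf.simps, subst length_Cons, subst sum.lessThan_Suc_shift) (simp add: m_def)
    also have "(\<Sum>j<m. (-1)^(Suc j) * f u (zs ! j) * pf f (v # dl j zs)) =
       - (\<Sum>j<m. (-1)^j * f u (zs!j) * (\<Sum>l<m-1. (-1)^l * f v (zs ! (if l<j then l else Suc l)) *
            P (if l<j then l else j) (if l<j then j else Suc l)))"
      unfolding sum_negf[symmetric]
    proof (rule sum.cong[OF refl])
      fix j assume j: "j \<in> {..<m}"
      have "pf f (v # dl j zs) = (\<Sum>l<m-1. (-1)^l * f v (zs ! (if l<j then l else Suc l)) *
            P (if l<j then l else j) (if l<j then j else Suc l))"
      proof -
        have "pf f (v # dl j zs) = (\<Sum>l<m-1. (-1)^l * f v (dl j zs ! l) * pf f (dl l (dl j zs)))"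
          using j by (simp add: m_def)
        also have "\<dots> = (\<Sum>l<m-1. (-1)^l * f v (zs ! (if l<j then l else Suc l)) *
            P (if l<j then l else j) (if l<j then j else Suc l))"
        proof (rule sum.cong[OF refl])
          fix l assume l: "l \<in> {..<m-1}"
          show "(-1)^l * f v (dl j zs ! l) * pf f (dl l (dl j zs)) = (-1)^l * f v (zs ! (if l<j then l else Suc l)) *
            P (if l<j then l else j) (if l<j then j else Suc l)"
          proof (cases "l < j")
            case True
            then show ?thesis using j l by (simp add: nth_dl P_def m_def)
          next
            case False
            then show ?thesis using j l dl_dl[of j l zs] by (simp add: nth_dl P_def m_def)
          qed
        qed
        finally show ?thesis .
      qed
      then show "(-1)^(Suc j) * f u (zs ! j) * pf f (v # dl j zs) = - ((-1)^j * f u (zs!j) * (\<Sum>l<m-1. (-1)^l * f v (zs ! (if l<j then l else Suc l)) *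
            P (if l<j then l else j) (if l<j then j else Suc l)))"
        by simp
    qed
    also have "(\<Sum>j<m. (-1)^j * f u (zs!j) * (\<Sum>l<m-1. (-1)^l * f v (zs ! (if l<j then l else Suc l)) *
            P (if l<j then l else j) (if l<j then j else Suc l)))
       = Vf (\<lambda>j. f v (zs!j)) (\<lambda>j. f u (zs!j)) - Vf (\<lambda>j. f u (zs!j)) (\<lambda>j. f v (zs!j))"
      using dsum[of "\<lambda>j. f u (zs!j)" "\<lambda>j. f v (zs!j)" P m] unfolding Vf_def
      by (simp add: if_distrib cong: if_cong)
    finally show ?thesis by simp
  qed
  have "f y x = - f x y" using sk by blast
  then show ?thesis unfolding e by simp
qed

lemma pf_swp:
  assumes sk: "\<forall>a b. f a b = - f b a"
  shows "Suc i < length xs \<Longrightarrow> pf f (swp i xs) = - pf f xs"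
proof (induction "length xs" arbitrary: xs i rule: less_induct)
  case less
  obtain x xs' where xsd: "xs = x # xs'" using less.prems by (cases xs) auto
  show ?case
  proof (cases i)
    case 0
    then obtain y zs where "xs' = y # zs" using less.prems xsd by (cases xs') auto
    then show ?thesis using 0 pf_swap0[OF sk, of y x zs] xsd by (simp del: pf.simps)
  next
    case (Suc i')
    let ?L = "length xs'"
    have i': "Suc i' < ?L" using less.prems Suc xsd by simp
    define g where "g = (\<lambda>j. (-1)^j * f x (xs'!j) * pf f (dl j xs'))"
    define \<tau> where "\<tau> = (\<lambda>j::nat. if j = i' then Suc i' else if j = Suc i' then i' else j)"
    have tm: "(-1)^j * f x (swp i' xs' ! j) * pf f (dl j (swp i' xs')) = - g (\<tau> j)" if j: "j < ?L" for j
    proof -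
      consider "j = i'" | "j = Suc i'" | "j < i'" | "Suc i' < j" by linarith
      then show ?thesis
      proof cases
        case 1
        then show ?thesis using i' by (simp add: nth_swp dl_swp_i g_def \<tau>_def)
      next
        case 2
        then show ?thesis using i' by (simp add: nth_swp dl_swp_Si g_def \<tau>_def)
      next
        case 3
        have "pf f (swp (i'-1) (dl j xs')) = - pf f (dl j xs')"
          by (rule less.hyps) (use 3 i' xsd in auto)
        then show ?thesis using 3 i' j by (simp add: nth_swp dl_swp_lt g_def \<tau>_def)
      next
        case 4
        have "pf f (swp i' (dl j xs')) = - pf f (dl j xs')"
          by (rule less.hyps) (use 4 i' j xsd in auto)
        then show ?thesis using 4 i' j by (simp add: nth_swp dl_swp_gt g_def \<tau>_def)
      qed
    qed
    have "pf f (swp i xs) = (\<Sum>j<?L. - g (\<tau> j))"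
      using Suc tm xsd by simp
    also have "\<dots> = - (\<Sum>j<?L. g j)"
    proof -
      have "(\<Sum>j<?L. g (\<tau> j)) = (\<Sum>j<?L. g j)"
        by (rule sum.reindex_bij_witness[where i=\<tau> and j=\<tau>]) (use i' in \<open>auto simp: \<tau>_def\<close>)
      then show ?thesis by (simp add: sum_negf)
    qed
    finally show ?thesis by (simp add: g_def xsd)
  qed
qed

lemma pf_adj_eq:
  assumes sk: "\<forall>a b. f a b = - f b a" and i: "Suc i < length xs" and e: "xs ! i = xs ! Suc i"
  shows "pf f xs = 0"
proof -
  have "swp i xs = xs"
    by (rule nth_equalityI) (use i e in \<open>auto simp: nth_swp\<close>)
  then show ?thesis using pf_swp[OF sk i] by simp
qed

lemma pf_eq0:
  assumes sk: "\<forall>a b. f a b = - f b a"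
  shows "i < j \<Longrightarrow> j < length xs \<Longrightarrow> xs ! i = xs ! j \<Longrightarrow> pf f xs = 0"
proof (induction j arbitrary: xs)
  case 0
  then show ?case by simp
next
  case (Suc j)
  show ?case
  proof (cases "j = i")
    case True
    then show ?thesis using pf_adj_eq[OF sk] Suc.prems by blast
  next
    case False
    then have ij: "i < j" using Suc.prems by simp
    have "pf f (swp j xs) = 0"
      by (rule Suc.IH) (use Suc.prems ij in \<open>auto simp: nth_swp\<close>)
    then show ?thesis using pf_swp[OF sk, of j xs] Suc.prems by simp
  qed
qed

definition bil :: "((nat \<Rightarrow> real) \<Rightarrow> (nat \<Rightarrow> real) \<Rightarrow> real) \<Rightarrow> bool" where
  "bil \<beta> \<longleftrightarrow> (\<forall>u w c z. \<beta> (\<lambda>t. u t + c * w t) z = \<beta> u z + c * \<beta> w z) \<and> (\<forall>u w. \<beta> u w = - \<beta> w u)"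

lemma bil_left: "bil \<beta> \<Longrightarrow> \<beta> (\<lambda>t. u t + c * w t) z = \<beta> u z + c * \<beta> w z"
  unfolding bil_def by blast

lemma bil_skew: "bil \<beta> \<Longrightarrow> \<beta> u w = - \<beta> w u"
  unfolding bil_def by blast

lemma bil_right: "bil \<beta> \<Longrightarrow> \<beta> z (\<lambda>t. u t + c * w t) = \<beta> z u + c * \<beta> z w"
  using bil_left[of \<beta> u c w z] bil_skew[of \<beta>] by (metis distrib_left minus_add_distrib mult_minus_right)

lemma bil_diag: "bil \<beta> \<Longrightarrow> \<beta> u u = 0"
  using bil_skew[of \<beta> u u] by simp

lemma pf_lin:
  assumes b: "bil \<beta>"
  shows "k < length xs \<Longrightarrow> pf \<beta> (xs[k := (\<lambda>t. u t + c * w t)]) = pf \<beta> (xs[k := u]) + c * pf \<beta> (xs[k := w])"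
proof (induction "length xs" arbitrary: xs k rule: less_induct)
  case less
  obtain x xs' where xsd: "xs = x # xs'" using less.prems by (cases xs) auto
  show ?case
  proof (cases k)
    case 0
    then show ?thesis using xsd
      by (simp add: bil_left[OF b] sum.distrib sum_distrib_left algebra_simps)
  next
    case (Suc k')
    have k': "k' < length xs'" using less.prems Suc xsd by simp
    have tw: "(-1)^j * \<beta> x (xs'[k' := (\<lambda>t. u t + c * w t)] ! j) * pf \<beta> (dl j (xs'[k' := (\<lambda>t. u t + c * w t)]))
        = (-1)^j * \<beta> x (xs'[k' := u] ! j) * pf \<beta> (dl j (xs'[k' := u]))
          + c * ((-1)^j * \<beta> x (xs'[k' := w] ! j) * pf \<beta> (dl j (xs'[k' := w])))" if j: "j < length xs'" for j
    proof (cases "j = k'")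
      case True
      then show ?thesis using k' by (simp add: dl_update bil_right[OF b] algebra_simps)
    next
      case False
      have "pf \<beta> ((dl j xs')[(if k' < j then k' else k' - 1) := (\<lambda>t. u t + c * w t)])
         = pf \<beta> ((dl j xs')[(if k' < j then k' else k' - 1) := u]) + c * pf \<beta> ((dl j xs')[(if k' < j then k' else k' - 1) := w])"
        by (rule less.hyps) (use False k' j xsd in auto)
      then show ?thesis using False k' by (simp add: dl_update algebra_simps)
    qed
    have "(\<Sum>j<length xs'. (-1)^j * \<beta> x (xs'[k' := (\<lambda>t. u t + c * w t)] ! j) * pf \<beta> (dl j (xs'[k' := (\<lambda>t. u t + c * w t)])))
        = (\<Sum>j<length xs'. (-1)^j * \<beta> x (xs'[k' := u] ! j) * pf \<beta> (dl j (xs'[k' := u]))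
          + c * ((-1)^j * \<beta> x (xs'[k' := w] ! j) * pf \<beta> (dl j (xs'[k' := w]))))"
      by (rule sum.cong[OF refl]) (rule tw, simp)
    then show ?thesis unfolding xsd Suc
      by (simp only: list_update.simps nat.case pf.simps(2) length_list_update sum_distrib_left sum.distrib)
  qed
qed

lemma pf_addinv:
  assumes b: "bil \<beta>" and kl: "k \<noteq> l" "k < length xs" "l < length xs"
  shows "pf \<beta> (xs[k := (\<lambda>t. (xs ! k) t + c * (xs ! l) t)]) = pf \<beta> xs"
proof -
  have sk: "\<forall>a b. \<beta> a b = - \<beta> b a" using bil_skew[OF b] by blast
  have "pf \<beta> (xs[k := xs ! l]) = 0"
  proof (cases "k < l")
    case True
    then show ?thesis using pf_eq0[OF sk, of k l "xs[k := xs ! l]"] kl by simp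
  next
    case False
    then show ?thesis using pf_eq0[OF sk, of l k "xs[k := xs ! l]"] kl by simp
  qed
  then show ?thesis using pf_lin[OF b, of k xs "xs ! k" c "xs ! l"] kl by simp
qed

lemma det_dt:
  "length rs = n \<Longrightarrow> length cs = n \<Longrightarrow> det (mat n n (\<lambda>(i,j). f (rs!i) (cs!j))) = dt f rs cs"
proof (induction rs arbitrary: n cs)
  case Nil
  then show ?case by (simp add: det_def)
next
  case (Cons r rs)
  then obtain n' where n: "n = Suc n'" by (cases n) auto
  define A where "A = mat n n (\<lambda>(i,j). f ((r#rs)!i) (cs!j))"
  have A: "A \<in> carrier_mat n n" unfolding A_def by simp
  have del: "mat_delete A 0 j = mat n' n' (\<lambda>(i,j'). f (rs!i) (dl j cs ! j'))" if j: "j < n" for j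
    by (rule eq_matI) (use j Cons.prems n in \<open>auto simp: mat_delete_def A_def nth_dl\<close>)
  have "det A = (\<Sum>j<n. A $$ (0,j) * cofactor A 0 j)"
    by (rule laplace_expansion_row[OF A]) (simp add: n)
  also have "\<dots> = (\<Sum>j<n. (-1)^j * f r (cs!j) * dt f rs (dl j cs))"
  proof (rule sum.cong[OF refl])
    fix j assume j: "j \<in> {..<n}"
    have "det (mat_delete A 0 j) = dt f rs (dl j cs)"
      unfolding del[OF j[simplified]] by (rule Cons.IH) (use j Cons.prems n in auto)
    then show "A $$ (0,j) * cofactor A 0 j = (-1)^j * f r (cs!j) * dt f rs (dl j cs)"
      using j n unfolding cofactor_def A_def by simp
  qed
  finally show ?case using Cons.prems unfolding A_def by simp
qed

lemma dt_col:
  assumes "length rs = Suc n" "length cs = n"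
  shows "dt f rs (c # cs) = (\<Sum>i<Suc n. (-1)^i * f (rs!i) c * dt f (dl i rs) cs)"
proof -
  define A where "A = mat (Suc n) (Suc n) (\<lambda>(i,j). f (rs!i) ((c#cs)!j))"
  have A: "A \<in> carrier_mat (Suc n) (Suc n)" unfolding A_def by simp
  have del: "mat_delete A i 0 = mat n n (\<lambda>(i',j). f (dl i rs ! i') (cs ! j))" if i: "i < Suc n" for i
    by (rule eq_matI) (use i assms in \<open>auto simp: mat_delete_def A_def nth_dl\<close>)
  have "dt f rs (c # cs) = det A" unfolding A_def by (rule det_dt[symmetric]) (use assms in auto)
  also have "\<dots> = (\<Sum>i<Suc n. A $$ (i,0) * cofactor A i 0)"
    by (rule laplace_expansion_column[OF A]) simp
  also have "\<dots> = (\<Sum>i<Suc n. (-1)^i * f (rs!i) c * dt f (dl i rs) cs)"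
  proof (rule sum.cong[OF refl])
    fix i assume i: "i \<in> {..<Suc n}"
    have "det (mat_delete A i 0) = dt f (dl i rs) cs"
      unfolding del[OF i[simplified]] by (rule det_dt) (use i assms in auto)
    then show "A $$ (i,0) * cofactor A i 0 = (-1)^i * f (rs!i) c * dt f (dl i rs) cs"
      using i unfolding cofactor_def A_def by simp
  qed
  finally show ?thesis .
qed

lemma dt_addrow:
  assumes b: "bil \<beta>" and kl: "k \<noteq> l" "k < n" "l < n" and len: "length rs = n" "length cs = n"
  shows "dt \<beta> (rs[k := (\<lambda>t. (rs!k) t + c * (rs!l) t)]) cs = dt \<beta> rs cs"
proof -
  define A where "A = mat n n (\<lambda>(i,j). \<beta> (rs!i) (cs!j))"
  have A: "A \<in> carrier_mat n n" unfolding A_def by simp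
  have "mat n n (\<lambda>(i,j). \<beta> (rs[k := (\<lambda>t. (rs!k) t + c * (rs!l) t)] ! i) (cs!j)) = addrow c k l A"
    by (rule eq_matI) (use kl len in \<open>auto simp: A_def mat_addrow_def bil_left[OF b] nth_list_update\<close>)
  then have "dt \<beta> (rs[k := (\<lambda>t. (rs!k) t + c * (rs!l) t)]) cs = det (addrow c k l A)"
    using det_dt[of "rs[k := (\<lambda>t. (rs!k) t + c * (rs!l) t)]" n cs \<beta>] len by simp
  also have "\<dots> = det A" by (rule det_addrow[OF kl(3) kl(1) A])
  also have "\<dots> = dt \<beta> rs cs" unfolding A_def by (rule det_dt[OF len])
  finally show ?thesis .
qed

lemma dt_addcol:
  assumes b: "bil \<beta>" and kl: "k \<noteq> l" "k < n" "l < n" and len: "length rs = n" "length cs = n"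
  shows "dt \<beta> rs (cs[k := (\<lambda>t. (cs!k) t + c * (cs!l) t)]) = dt \<beta> rs cs"
proof -
  define A where "A = mat n n (\<lambda>(i,j). \<beta> (rs!i) (cs!j))"
  have A: "A \<in> carrier_mat n n" unfolding A_def by simp
  have "mat n n (\<lambda>(i,j). \<beta> (rs!i) (cs[k := (\<lambda>t. (cs!k) t + c * (cs!l) t)] ! j)) = addcol c k l A"
    by (rule eq_matI) (use kl len in \<open>auto simp: A_def mat_addcol_def bil_right[OF b] nth_list_update\<close>)
  then have "dt \<beta> rs (cs[k := (\<lambda>t. (cs!k) t + c * (cs!l) t)]) = det (addcol c k l A)"
    using det_dt[of rs n "cs[k := (\<lambda>t. (cs!k) t + c * (cs!l) t)]" \<beta>] len by simp
  also have "\<dots> = det A" by (rule det_addcol[OF kl(3) kl(1) A])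
  also have "\<dots> = dt \<beta> rs cs" unfolding A_def by (rule det_dt[OF len])
  finally show ?thesis .
qed

lemma dt_addboth:
  assumes b: "bil \<beta>" and kl: "k \<noteq> l" "k < length vs" "l < length vs"
  shows "dt \<beta> (vs[k := (\<lambda>t. (vs!k) t + c * (vs!l) t)]) (vs[k := (\<lambda>t. (vs!k) t + c * (vs!l) t)]) = dt \<beta> vs vs"
proof -
  let ?v = "vs[k := (\<lambda>t. (vs!k) t + c * (vs!l) t)]"
  have "dt \<beta> ?v ?v = dt \<beta> ?v vs"
    by (rule dt_addcol[OF b kl(1) kl(2) kl(3)]) auto
  also have "\<dots> = dt \<beta> vs vs"
    by (rule dt_addrow[OF b kl(1) kl(2) kl(3)]) auto
  finally show ?thesis .
qed

lemma sum_single: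
  fixes g :: "nat \<Rightarrow> real"
  assumes "p < m" "\<And>j. j < m \<Longrightarrow> j \<noteq> p \<Longrightarrow> g j = 0"
  shows "(\<Sum>j<m. g j) = g p"
proof -
  have "(\<Sum>j<m. g j) = g p + (\<Sum>j\<in>{..<m} - {p}. g j)"
    using assms(1) by (simp add: sum.remove)
  also have "(\<Sum>j\<in>{..<m} - {p}. g j) = 0" using assms(2) by (intro sum.neutral) auto
  finally show ?thesis by simp
qed

theorem dt_pf:
  assumes b: "bil \<beta>"
  shows "dt \<beta> vs vs = (pf \<beta> vs)^2"
proof (induction "length vs" arbitrary: vs rule: less_induct)
  case less
  show ?case
  proof (cases vs)
    case Nil
    then show ?thesis by simp
  next
    case (Cons x ys)
    define m where "m = length ys"
    show ?thesis
    proof (cases "\<forall>l<m. \<beta> x (ys!l) = 0")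
      case True
      have "pf \<beta> vs = 0" using Cons True by (simp add: m_def)
      moreover have "dt \<beta> vs vs = 0"
      proof -
        have "dt \<beta> vs vs = (\<Sum>j<Suc m. (-1)^j * \<beta> x ((x#ys)!j) * dt \<beta> ys (dl j (x#ys)))"
          using Cons by (simp add: m_def)
        also have "\<dots> = 0"
          by (rule sum.neutral) (use True bil_diag[OF b] in \<open>auto simp: nth_Cons split: nat.splits\<close>)
        finally show ?thesis .
      qed
      ultimately show ?thesis by simp
    next
      case False
      then obtain p where p: "p < m" and a0: "\<beta> x (ys!p) \<noteq> 0" by blast
      define y where "y = ys!p"
      define a where "a = \<beta> x y"
      have a: "a \<noteq> 0" using a0 by (simp add: a_def y_def)
      define T where "T = (\<lambda>z. (\<lambda>t. (z t + (- \<beta> z y / a) * x t) + (\<beta> z x / a) * y t))"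
      define mk where "mk = (\<lambda>S. x # map (\<lambda>l. if l \<in> S then T (ys!l) else ys!l) [0..<m])"
      have len_mk: "length (mk S) = Suc m" for S by (simp add: mk_def)
      have inv: "pf \<beta> (mk S) = pf \<beta> vs \<and> dt \<beta> (mk S) (mk S) = dt \<beta> vs vs"
        if "finite S" "S \<subseteq> {..<m} - {p}" for S
        using that
      proof (induction S rule: finite_induct)
        case empty
        have "mk {} = vs" using Cons by (simp add: mk_def m_def map_nth)
        then show ?case by simp
      next
        case (insert k S)
        have k: "k < m" "k \<noteq> p" "k \<notin> S" using insert by auto
        let ?L = "mk S"
        have L0: "?L ! 0 = x" by (simp add: mk_def)
        have pS: "p \<notin> S" using insert.prems by auto
        have Lp: "?L ! Suc p = y" using pS p by (simp add: mk_def y_def)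
        have Lk: "?L ! Suc k = ys ! k" using k by (simp add: mk_def)
        define c1 where "c1 = - \<beta> (ys!k) y / a"
        define c2 where "c2 = \<beta> (ys!k) x / a"
        define L1 where "L1 = ?L[Suc k := (\<lambda>t. (?L ! Suc k) t + c1 * (?L ! 0) t)]"
        define L2 where "L2 = L1[Suc k := (\<lambda>t. (L1 ! Suc k) t + c2 * (L1 ! Suc p) t)]"
        have len1: "length L1 = Suc m" by (simp add: L1_def len_mk)
        have L1p: "L1 ! Suc p = y" using k Lp by (simp add: L1_def)
        have L1k: "L1 ! Suc k = (\<lambda>t. (ys ! k) t + c1 * x t)" using k len_mk by (simp add: L1_def L0 Lk)
        have L2eq: "L2 = mk (insert k S)"
        proof (rule nth_equalityI)
          show "length L2 = length (mk (insert k S))" by (simp add: L2_def len1 len_mk)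
        next
          fix i assume i: "i < length L2"
          show "L2 ! i = mk (insert k S) ! i"
          proof (cases "i = Suc k")
            case True
            then show ?thesis using k len1 L1p L1k by (simp add: L2_def mk_def T_def c1_def c2_def)
          next
            case False
            then show ?thesis using i len1 by (cases i) (auto simp: L2_def L1_def mk_def)
          qed
        qed
        have "pf \<beta> L1 = pf \<beta> ?L" unfolding L1_def
          by (rule pf_addinv[OF b]) (use k len_mk in auto)
        moreover have "pf \<beta> L2 = pf \<beta> L1" unfolding L2_def
          by (rule pf_addinv[OF b]) (use k p len1 in auto)
        moreover have "dt \<beta> L1 L1 = dt \<beta> ?L ?L" unfolding L1_def
          by (rule dt_addboth[OF b]) (use k len_mk in auto)
        moreover have "dt \<beta> L2 L2 = dt \<beta> L1 L1" unfolding L2_def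
          by (rule dt_addboth[OF b]) (use k p len1 in auto)
        ultimately show ?case using insert.IH insert.prems L2eq by auto
      qed
      define S where "S = {..<m} - {p}"
      define ys' where "ys' = map (\<lambda>l. if l \<in> S then T (ys!l) else ys!l) [0..<m]"
      have mkS: "mk S = x # ys'" by (simp add: mk_def ys'_def)
      have inv': "pf \<beta> (x # ys') = pf \<beta> vs" "dt \<beta> (x # ys') (x # ys') = dt \<beta> vs vs"
        using inv[of S] mkS by (auto simp: S_def)
      have len': "length ys' = m" by (simp add: ys'_def)
      have ysp: "ys' ! p = y" using p by (simp add: ys'_def S_def y_def)
      have Tx: "\<beta> x (T z) = 0" for z
      proof -
        have "\<beta> x (T z) = \<beta> x z + (- \<beta> z y / a) * \<beta> x x + (\<beta> z x / a) * \<beta> x y"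
          unfolding T_def by (simp only: bil_right[OF b])
        then show ?thesis using a bil_skew[OF b, of z x] bil_diag[OF b, of x] by (simp add: a_def)
      qed
      have Ty: "\<beta> y (T z) = 0" for z
      proof -
        have "\<beta> y (T z) = \<beta> y z + (- \<beta> z y / a) * \<beta> y x + (\<beta> z x / a) * \<beta> y y"
          unfolding T_def by (simp only: bil_right[OF b])
        then show ?thesis using a bil_skew[OF b, of z y] bil_diag[OF b, of y] bil_skew[OF b, of y x]
          by (simp add: a_def)
      qed
      have ysl: "ys' ! l = T (ys ! l)" if "l < m" "l \<noteq> p" for l
        using that by (simp add: ys'_def S_def)
      define zs where "zs = dl p ys'"
      have lenz: "length zs = m - 1" using p len' by (simp add: zs_def)
      have "pf \<beta> (x # ys') = (\<Sum>j<m. (-1)^j * \<beta> x (ys'!j) * pf \<beta> (dl j ys'))"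
        using len' by simp
      also have "\<dots> = (-1)^p * a * pf \<beta> zs"
        by (subst sum_single[OF p]) (auto simp: ysl Tx ysp a_def zs_def)
      finally have pfe: "pf \<beta> vs = (-1)^p * a * pf \<beta> zs" using inv' by simp
      have "dt \<beta> (x # ys') (x # ys') = (\<Sum>j<Suc m. (-1)^j * \<beta> x ((x#ys')!j) * dt \<beta> ys' (dl j (x#ys')))"
        using len' by simp
      also have "\<dots> = (\<Sum>l<m. (-1)^(Suc l) * \<beta> x (ys'!l) * dt \<beta> ys' (x # dl l ys'))"
        by (subst sum.lessThan_Suc_shift) (simp add: bil_diag[OF b])
      also have "\<dots> = (-1)^(Suc p) * a * dt \<beta> ys' (x # zs)"
        by (subst sum_single[OF p]) (auto simp: ysl Tx ysp a_def zs_def)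
      also have "dt \<beta> ys' (x # zs) = (\<Sum>i<Suc (m-1). (-1)^i * \<beta> (ys'!i) x * dt \<beta> (dl i ys') zs)"
        by (rule dt_col) (use len' lenz p in auto)
      also have "\<dots> = (-1)^p * \<beta> y x * dt \<beta> zs zs"
      proof -
        have "Suc (m - 1) = m" using p by simp
        then show ?thesis
          by (simp only:) (subst sum_single[OF p], auto simp: ysl ysp zs_def bil_skew[OF b, of "T _" x] Tx)
      qed
      finally have dte: "dt \<beta> vs vs = (-1)^(Suc p) * a * ((-1)^p * \<beta> y x * dt \<beta> zs zs)" using inv' by simp
      have IH: "dt \<beta> zs zs = (pf \<beta> zs)^2"
        by (rule less.hyps) (use lenz Cons m_def in auto)
      have yx: "\<beta> y x = - a" using bil_skew[OF b, of y x] by (simp add: a_def)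
      have pp: "(-1::real)^p * (-1)^p = 1" by (simp flip: power_add)
      show ?thesis unfolding dte pfe IH yx
        by (simp add: power2_eq_square algebra_simps pp)
    qed
  qed
qed

definition sg :: "nat \<Rightarrow> bool list \<Rightarrow> real" where
  "sg j b = (\<Prod>i<j. if b!i then -1 else 1)"

definition cop :: "nat \<Rightarrow> (nat \<Rightarrow> real) \<Rightarrow> qstate \<Rightarrow> qstate" where
  "cop n x v b = (\<Sum>i<n. complex_of_real (x i * sg i b) * v (b[i := \<not> b!i]))"

definition an :: "nat \<Rightarrow> qstate \<Rightarrow> qstate" where
  "an i v b = (if b!i then 0 else complex_of_real (sg i b) * v (b[i := True]))"

lemma sg_upd_ge: "j \<le> i \<Longrightarrow> sg j (b[i := c]) = sg j b"
  unfolding sg_def by (rule prod.cong) auto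

lemma sg_flip: assumes "i < j" "i < length b" shows "sg j (b[i := \<not> b!i]) = - sg j b"
proof -
  have "sg j (b[i := \<not> b!i]) = (if \<not> b!i then -1 else 1) * (\<Prod>l\<in>{..<j} - {i}. if b[i := \<not> b!i]!l then -1 else 1)"
    unfolding sg_def using assms by (subst prod.remove[of _ i]) auto
  also have "(\<Prod>l\<in>{..<j} - {i}. if b[i := \<not> b!i]!l then -1 else (1::real)) = (\<Prod>l\<in>{..<j} - {i}. if b!l then -1 else 1)"
    by (rule prod.cong) auto
  also have "sg j b = (if b!i then -1 else 1) * (\<Prod>l\<in>{..<j} - {i}. if b!l then -1 else (1::real))"
    unfolding sg_def using assms by (subst prod.remove[of _ i]) auto
  ultimately show ?thesis by auto
qed

lemma sg_sq: "sg j b * sg j b = 1"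
  unfolding sg_def prod.distrib[symmetric] by (rule prod.neutral) auto

lemma finite_bitstrings: "finite (bitstrings n)"
proof -
  have "bitstrings n = {xs. set xs \<subseteq> UNIV \<and> length xs = n}" by (auto simp: bitstrings_def)
  then show ?thesis using finite_lists_length_eq[of "UNIV :: bool set" n] by simp
qed

lemma nth_annlist: "i < n \<Longrightarrow> j < n \<Longrightarrow>
  (replicate j sigma_z @ ket0bra1 # replicate (n - Suc j) id_qubit) ! i =
  (if i < j then sigma_z else if i = j then ket0bra1 else id_qubit)"
  by (auto simp: nth_append nth_Cons')

lemma kron_ann:
  assumes lb': "length b' = n" and lb: "length b = n" and j: "j < n"
  shows "ann n j b' b = (if b = b'[j := True] \<and> \<not> b'!j then complex_of_real (sg j b') else 0)"
proof -
  define F where "F = (\<lambda>i. (if i < j then sigma_z else if i = j then ket0bra1 else id_qubit) (b'!i) (b!i))"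
  have A: "ann n j b' b = (\<Prod>i<n. F i)"
    unfolding ann_def kron_def
  proof (rule prod.cong)
    show "{..<length (replicate j sigma_z @ [ket0bra1] @ replicate (n - j - 1) id_qubit)} = {..<n}" using j by simp
  next
    fix i assume "i \<in> {..<n}"
    then have "(replicate j sigma_z @ [ket0bra1] @ replicate (n - j - 1) id_qubit) ! i =
      (if i < j then sigma_z else if i = j then ket0bra1 else id_qubit)" using nth_annlist[of i n j] j by simp
    then show "((replicate j sigma_z @ [ket0bra1] @ replicate (n - j - 1) id_qubit) ! i) (b' ! i) (b ! i) = F i"
      unfolding F_def by simp
  qed
  show ?thesis
  proof (cases "b = b'[j := True] \<and> \<not> b'!j")
    case True
    then have "F i = (if i < j then (if b'!i then -1 else 1) else 1)" if "i < n" for i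
      using that lb' j by (auto simp: F_def sigma_z_def ket0bra1_def id_qubit_def)
    then have "(\<Prod>i<n. F i) = (\<Prod>i<n. if i < j then (if b'!i then -1 else 1) else 1)"
      by (intro prod.cong) auto
    also have "\<dots> = (\<Prod>i<j. if b'!i then -1 else 1)"
      using j by (intro prod.mono_neutral_cong_right) auto
    also have "\<dots> = complex_of_real (sg j b')" unfolding sg_def of_real_prod by (intro prod.cong) auto
    finally show ?thesis using A True by simp
  next
    case False
    have "\<exists>i<n. F i = 0"
    proof (cases "b'!j")
      case True
      then show ?thesis using j by (intro exI[of _ j]) (auto simp: F_def ket0bra1_def)
    next
      case bj: False
      then have "b \<noteq> b'[j := True]" using False by simp
      have "\<exists>i<n. b ! i \<noteq> b'[j := True] ! i"
      proof (rule ccontr)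
        assume "\<not> (\<exists>i<n. b ! i \<noteq> b'[j := True] ! i)"
        then have "b = b'[j := True]" by (intro nth_equalityI) (use lb lb' in auto)
        then show False using \<open>b \<noteq> b'[j := True]\<close> by simp
      qed
      then obtain i where i: "i < n" "b ! i \<noteq> b'[j := True] ! i" by blast
      show ?thesis
      proof (cases "i = j")
        case True
        then show ?thesis using i bj lb' by (intro exI[of _ j]) (auto simp: F_def ket0bra1_def)
      next
        case ne: False
        then show ?thesis using i by (intro exI[of _ i]) (auto simp: F_def sigma_z_def id_qubit_def)
      qed
    qed
    then have "(\<Prod>i<n. F i) = 0" by (intro prod_zero) auto
    then show ?thesis using A by (simp only: if_not_P[OF False])
  qed
qed

lemma apply_ann:
  assumes lb': "length b' = n" and j: "j < n"
  shows "apply_op n (ann n j) v b' = (if b'!j then 0 else complex_of_real (sg j b') * v (b'[j := True]))"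
proof -
  have "apply_op n (ann n j) v b' = (\<Sum>b\<in>bitstrings n. if b = b'[j := True] then
      (if \<not> b'!j then complex_of_real (sg j b') else 0) * v b else 0)"
    unfolding apply_op_def
    by (rule sum.cong[OF refl]) (use lb' j in \<open>auto simp: kron_ann bitstrings_def\<close>)
  also have "\<dots> = (if \<not> b'!j then complex_of_real (sg j b') else 0) * v (b'[j := True])"
    using lb' by (subst sum.delta[OF finite_bitstrings]) (auto simp: bitstrings_def)
  finally show ?thesis by simp
qed

lemma apply_adj_ann:
  assumes lb': "length b' = n" and j: "j < n"
  shows "apply_op n (adjoint_op (ann n j)) v b' = (if b'!j then complex_of_real (sg j b') * v (b'[j := False]) else 0)"
proof -
  have eq: "(b' = b[j := True] \<and> \<not> b!j) \<longleftrightarrow> (b'!j \<and> b = b'[j := False])" if lb: "length b = n" for b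
  proof
    assume h: "b' = b[j := True] \<and> \<not> b!j"
    then have "b'[j := False] = b" using lb j by (metis list_update_id list_update_overwrite)
    then show "b'!j \<and> b = b'[j := False]" using h lb j by auto
  next
    assume h: "b'!j \<and> b = b'[j := False]"
    have "b'[j := True] = b'" using h by (metis list_update_id)
    then show "b' = b[j := True] \<and> \<not> b!j" using h lb' j by auto
  qed
  have "apply_op n (adjoint_op (ann n j)) v b' = (\<Sum>b\<in>bitstrings n. if b = b'[j := False] then
      (if b'!j then complex_of_real (sg j b') else 0) * v b else 0)"
    unfolding apply_op_def adjoint_op_def
  proof (rule sum.cong[OF refl])
    fix b assume "b \<in> bitstrings n"
    then have lb: "length b = n" by (simp add: bitstrings_def)
    show "cnj (ann n j b b') * v b = (if b = b'[j := False] then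
      (if b'!j then complex_of_real (sg j b') else 0) * v b else 0)"
      using eq[OF lb] lb lb' j by (auto simp: kron_ann sg_upd_ge)
  qed
  also have "\<dots> = (if b'!j then complex_of_real (sg j b') else 0) * v (b'[j := False])"
    using lb' by (subst sum.delta[OF finite_bitstrings]) (auto simp: bitstrings_def)
  finally show ?thesis by simp
qed

lemma apply_maj:
  assumes lb': "length b' = n"
  shows "apply_op n (majorana_op n x) v b' = cop n x v b'"
proof -
  have "apply_op n (majorana_op n x) v b' =
     (\<Sum>i<n. complex_of_real (x i) * (apply_op n (ann n i) v b' + apply_op n (adjoint_op (ann n i)) v b'))"
    unfolding apply_op_def majorana_op_def
    by (simp add: sum_distrib_left sum_distrib_right sum.distrib distrib_left distrib_right mult_ac
        sum.swap[of _ "bitstrings n" "{..<n}"])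
  also have "\<dots> = cop n x v b'"
    unfolding cop_def
    by (rule sum.cong[OF refl]) (use lb' in \<open>auto simp: apply_ann apply_adj_ann\<close>)
  finally show ?thesis .
qed

lemma cop_cong: "(\<And>b. length b = n \<Longrightarrow> v b = w b) \<Longrightarrow> length b = n \<Longrightarrow> cop n x v b = cop n x w b"
  unfolding cop_def by (rule sum.cong) auto

lemma cop_lin: "finite J \<Longrightarrow> cop n x (\<lambda>b. \<Sum>j\<in>J. c j * f j b) b = (\<Sum>j\<in>J. c j * cop n x (f j) b)"
  unfolding cop_def by (simp add: sum_distrib_left mult_ac sum.swap[of _ J])

definition psi :: "nat \<Rightarrow> (nat \<Rightarrow> real) list \<Rightarrow> qstate" where
  "psi n xs = foldr (cop n) xs (vacuum n)"

lemma psi_Nil[simp]: "psi n [] = vacuum n" by (simp add: psi_def)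
lemma psi_Cons[simp]: "psi n (x # xs) = cop n x (psi n xs)" by (simp add: psi_def)

lemma apply_op_cong: "(\<And>b. length b = n \<Longrightarrow> v b = w b) \<Longrightarrow> apply_op n M v = apply_op n M w"
  unfolding apply_op_def by (intro ext sum.cong) (auto simp: bitstrings_def)

lemma foldr_psi: "length b = n \<Longrightarrow>
  foldr (\<lambda>k v. apply_op n (majorana_op n (g k)) v) ks (vacuum n) b = psi n (map g ks) b"
proof (induction ks arbitrary: b)
  case Nil
  then show ?case by simp
next
  case (Cons k ks)
  have "apply_op n (majorana_op n (g k)) (foldr (\<lambda>k v. apply_op n (majorana_op n (g k)) v) ks (vacuum n)) b
      = apply_op n (majorana_op n (g k)) (psi n (map g ks)) b"
    by (subst apply_op_cong[of n _ "psi n (map g ks)"]) (auto simp: Cons.IH)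
  also have "\<dots> = cop n (g k) (psi n (map g ks)) b" by (rule apply_maj[OF Cons.prems])
  finally show ?case by simp
qed

lemma anticomm:
  assumes i: "i < n" and lb: "length b = n"
  shows "an i (cop n x v) b = - cop n x (an i v) b + complex_of_real (x i) * v b"
proof (cases "b!i")
  case True
  have "cop n x (an i v) b = (\<Sum>k<n. if k = i then complex_of_real (x i) * v b else 0)"
    unfolding cop_def
  proof (rule sum.cong[OF refl])
    fix k assume k: "k \<in> {..<n}"
    show "complex_of_real (x k * sg k b) * an i v (b[k := \<not> b ! k]) = (if k = i then complex_of_real (x i) * v b else 0)"
    proof (cases "k = i")
      case True
      have "complex_of_real (sg i b) * complex_of_real (sg i b) = 1"
        using sg_sq[of i b] by (metis of_real_1 of_real_mult)
      moreover have "b[i := False, i := True] = b" using \<open>b!i\<close> list_update_id[of b i] by simp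
      ultimately show ?thesis using True \<open>b!i\<close> i lb
        by (simp add: an_def sg_upd_ge mult_ac)
    next
      case False
      then show ?thesis using \<open>b!i\<close> by (simp add: an_def)
    qed
  qed
  then show ?thesis using True i by (simp add: an_def)
next
  case False
  have "an i (cop n x v) b = (\<Sum>k<n. complex_of_real (sg i b) * (complex_of_real (x k * sg k (b[i := True])) * v (b[i := True, k := \<not> b[i := True] ! k])))"
    using False unfolding an_def cop_def by (simp add: sum_distrib_left)
  also have "\<dots> = (\<Sum>k<n. - (complex_of_real (x k * sg k b) * an i v (b[k := \<not> b ! k])) + (if k = i then complex_of_real (x i) * v b else 0))"
  proof (rule sum.cong[OF refl])
    fix k assume k: "k \<in> {..<n}"
    show "complex_of_real (sg i b) * (complex_of_real (x k * sg k (b[i := True])) * v (b[i := True, k := \<not> b[i := True] ! k]))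
      = - (complex_of_real (x k * sg k b) * an i v (b[k := \<not> b ! k])) + (if k = i then complex_of_real (x i) * v b else 0)"
    proof (cases "k = i")
      case True
      have "complex_of_real (sg i b) * complex_of_real (sg i b) = 1"
        using sg_sq[of i b] by (metis of_real_1 of_real_mult)
      moreover have "b[i := True, i := False] = b" using False list_update_id[of b i] by simp
      ultimately show ?thesis using True False i lb
        by (simp add: an_def sg_upd_ge mult_ac)
    next
      case ne: False
      have swp: "b[i := True, k := \<not> b ! k] = b[k := \<not> b ! k, i := True]"
        using ne by (simp add: list_update_swap)
      have bT: "b[i := True] = b[i := \<not> b!i]" using False by simp
      show ?thesis
      proof (cases "k < i")
        case True
        have s1: "sg k (b[i := True]) = sg k b" using True by (simp add: sg_upd_ge)
        have s2: "sg i (b[k := \<not> b ! k]) = - sg i b" using True i lb by (simp add: sg_flip)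
        show ?thesis using ne False k lb
          by (simp add: an_def swp s1 s2 nth_list_update)
      next
        case gt: False
        then have ik: "i < k" using ne by simp
        have s1: "sg k (b[i := True]) = - sg k b" unfolding bT using ik i lb by (simp add: sg_flip)
        have s2: "sg i (b[k := \<not> b ! k]) = sg i b" using ik by (simp add: sg_upd_ge)
        show ?thesis using ne False k lb
          by (simp add: an_def swp s1 s2 nth_list_update)
      qed
    qed
  qed
  also have "\<dots> = - cop n x (an i v) b + complex_of_real (x i) * v b"
    unfolding cop_def using i by (simp add: sum_subtractf)
  finally show ?thesis .
qed

lemma an_vac: "i < n \<Longrightarrow> length b = n \<Longrightarrow> an i (vacuum n) b = 0"
  unfolding an_def vacuum_def
  by (auto dest: arg_cong[where f="\<lambda>l. l ! i"])

lemma R1: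
  assumes i: "i < n"
  shows "length b = n \<Longrightarrow> an i (psi n xs) b = (\<Sum>j<length xs. complex_of_real ((-1)^j * (xs!j) i) * psi n (dl j xs) b)"
proof (induction xs arbitrary: b)
  case Nil
  then show ?case using an_vac[OF i] by simp
next
  case (Cons x xs)
  have "an i (psi n (x # xs)) b = - cop n x (an i (psi n xs)) b + complex_of_real (x i) * psi n xs b"
    using anticomm[OF i Cons.prems] by simp
  also have "cop n x (an i (psi n xs)) b
      = cop n x (\<lambda>b. \<Sum>j<length xs. complex_of_real ((-1)^j * (xs!j) i) * psi n (dl j xs) b) b"
    by (rule cop_cong[OF _ Cons.prems]) (rule Cons.IH)
  also have "\<dots> = (\<Sum>j<length xs. complex_of_real ((-1)^j * (xs!j) i) * psi n (x # dl j xs) b)"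
    by (simp add: cop_lin)
  finally have e: "an i (psi n (x # xs)) b = complex_of_real (x i) * psi n xs b
     - (\<Sum>j<length xs. complex_of_real ((-1)^j * (xs!j) i) * psi n (x # dl j xs) b)" by simp
  have "(\<Sum>j<length (x#xs). complex_of_real ((-1)^j * ((x#xs)!j) i) * psi n (dl j (x#xs)) b)
     = complex_of_real (x i) * psi n xs b
       + (\<Sum>j<length xs. complex_of_real ((-1)^(Suc j) * (xs!j) i) * psi n (x # dl j xs) b)"
    by (simp only: length_Cons sum.lessThan_Suc_shift) simp
  also have "(\<Sum>j<length xs. complex_of_real ((-1)^(Suc j) * (xs!j) i) * psi n (x # dl j xs) b)
     = - (\<Sum>j<length xs. complex_of_real ((-1)^j * (xs!j) i) * psi n (x # dl j xs) b)"
    by (simp add: sum_negf[symmetric])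
  finally show ?case using e by simp
qed

lemma R2:
  "psi n (x # xs) (replicate n False) =
   (\<Sum>j<length xs. complex_of_real ((-1)^j * (\<Sum>i<n. x i * (xs!j) i)) * psi n (dl j xs) (replicate n False))"
proof -
  let ?z = "replicate n False"
  have sgz: "sg i ?z = 1" if "i < n" for i unfolding sg_def by (rule prod.neutral) (use that in auto)
  have "psi n (x # xs) ?z = (\<Sum>i<n. complex_of_real (x i) * an i (psi n xs) ?z)"
    unfolding psi_Cons cop_def by (rule sum.cong[OF refl]) (simp add: an_def sgz[OF lessThan_iff[THEN iffD1]])
  also have "\<dots> = (\<Sum>i<n. complex_of_real (x i) *
       (\<Sum>j<length xs. complex_of_real ((-1)^j * (xs!j) i) * psi n (dl j xs) ?z))"
    by (rule sum.cong[OF refl]) (simp add: R1)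
  also have "\<dots> = (\<Sum>j<length xs. complex_of_real ((-1)^j * (\<Sum>i<n. x i * (xs!j) i)) * psi n (dl j xs) ?z)"
    by (simp add: sum_distrib_left sum_distrib_right sum.swap[of _ "{..<n}"] mult_ac)
  finally show ?thesis .
qed

lemma basis_insert:
  assumes i: "i < n" "i \<notin> S" "\<forall>l\<in>S. i < l"
  shows "psi n xs (basis_of_set n (insert i S)) = an i (psi n xs) (basis_of_set n S)"
proof -
  have b1: "basis_of_set n (insert i S) = (basis_of_set n S)[i := True]"
    by (rule nth_equalityI) (use i(1) in \<open>auto simp: basis_of_set_def nth_list_update\<close>)
  have b2: "basis_of_set n S ! i = False" using i by (simp add: basis_of_set_def)
  have b3: "sg i (basis_of_set n S) = 1"
    unfolding sg_def by (rule prod.neutral) (use i in \<open>auto simp: basis_of_set_def\<close>)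
  show ?thesis unfolding an_def b1 b2 b3 by simp
qed

lemma sorted_dl: "sorted_wrt P xs \<Longrightarrow> sorted_wrt P (dl j xs)"
  by (induction j xs rule: dl.induct) (auto dest: set_dl[THEN subsetD])

datatype item = R nat | V nat

definition Kf :: "real mat \<Rightarrow> item \<Rightarrow> item \<Rightarrow> real" where
  "Kf X a b = (case a of
      R i \<Rightarrow> (case b of R i' \<Rightarrow> 0 | V k \<Rightarrow> X $$ (i, k))
    | V k \<Rightarrow> (case b of R i \<Rightarrow> - X $$ (i, k)
        | V k' \<Rightarrow> (if k \<le> k' then (transpose_mat X * X) $$ (k, k') else 0)
                - (if k' \<le> k then (transpose_mat X * X) $$ (k', k) else 0)))"

lemma Kf_skew: "Kf X a b = - Kf X b a"
  unfolding Kf_def by (cases a; cases b) auto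

fun sgnf :: "nat \<Rightarrow> real" where
  "sgnf 0 = 1"
| "sgnf (Suc m) = (-1)^m * sgnf m"

lemma sgnf_sq: "sgnf m * sgnf m = 1"
  by (induction m) (auto simp: algebra_simps simp flip: power_add)

definition colv :: "real mat \<Rightarrow> nat \<Rightarrow> nat \<Rightarrow> real" where
  "colv X k = (\<lambda>i. X $$ (i, k))"

lemma gram_entry: "X \<in> carrier_mat n r \<Longrightarrow> k < r \<Longrightarrow> k' < r \<Longrightarrow>
  (transpose_mat X * X) $$ (k, k') = (\<Sum>i<n. X $$ (i, k) * X $$ (i, k'))"
  by (auto simp: scalar_prod_def atLeast0LessThan)

lemma sum_split_add: "(\<Sum>j<a + c. f j) = (\<Sum>j<a. f j) + (\<Sum>b<c. f (a + b))" for a c :: nat and f :: "nat \<Rightarrow> 'a::comm_monoid_add"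
  by (induction c) (auto simp: add_ac)

lemma amp0:
  assumes X: "X \<in> carrier_mat n r"
  shows "sorted_wrt (<) ks \<Longrightarrow> set ks \<subseteq> {..<r} \<Longrightarrow>
    psi n (map (colv X) ks) (basis_of_set n {}) = complex_of_real (pf (Kf X) (map V ks))"
proof (induction "length ks" arbitrary: ks rule: less_induct)
  case less
  have z: "basis_of_set n {} = replicate n False" by (simp add: basis_of_set_def map_replicate_const)
  show ?case
  proof (cases ks)
    case Nil
    then show ?thesis by (simp add: z vacuum_def)
  next
    case (Cons k ks')
    have kk: "k < ks' ! j" "k < r" "ks' ! j < r" "k \<le> ks' ! j" "\<not> ks' ! j \<le> k" if "j < length ks'" for j
    proof -
      have m: "ks' ! j \<in> set ks'" using that by simp
      have "ks' ! j \<in> {..<r}" using less.prems Cons m by auto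
      then show "k < ks' ! j" "k < r" "ks' ! j < r" "k \<le> ks' ! j" "\<not> ks' ! j \<le> k" using less.prems Cons m by auto
    qed
    have "psi n (map (colv X) ks) (basis_of_set n {}) =
      (\<Sum>j<length ks'. complex_of_real ((-1)^j * (\<Sum>i<n. X $$ (i,k) * X $$ (i, ks'!j))) *
         psi n (map (colv X) (dl j ks')) (basis_of_set n {}))"
      unfolding z Cons list.map(2) R2 by (simp add: dl_map colv_def)
    also have "\<dots> = (\<Sum>j<length ks'. complex_of_real ((-1)^j * (\<Sum>i<n. X $$ (i,k) * X $$ (i, ks'!j))) *
         complex_of_real (pf (Kf X) (map V (dl j ks'))))"
    proof (rule sum.cong[OF refl])
      fix j assume j: "j \<in> {..<length ks'}"
      have "psi n (map (colv X) (dl j ks')) (basis_of_set n {}) = complex_of_real (pf (Kf X) (map V (dl j ks')))"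
        by (rule less.hyps) (use less.prems Cons j length_dl_le[of j ks'] set_dl[of j ks'] in \<open>auto intro: sorted_dl\<close>)
      then show "complex_of_real ((-1)^j * (\<Sum>i<n. X $$ (i,k) * X $$ (i, ks'!j))) *
         psi n (map (colv X) (dl j ks')) (basis_of_set n {}) = complex_of_real ((-1)^j * (\<Sum>i<n. X $$ (i,k) * X $$ (i, ks'!j))) *
         complex_of_real (pf (Kf X) (map V (dl j ks')))" by simp
    qed
    also have "\<dots> = complex_of_real (pf (Kf X) (map V ks))"
      unfolding Cons of_real_sum[symmetric] of_real_mult[symmetric] list.map(2) pf.simps(2) length_map
      by (rule arg_cong[where f=complex_of_real], rule sum.cong[OF refl])
         (simp add: dl_map Kf_def kk gram_entry[OF X])
    finally show ?thesis .
  qed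
qed

lemma amp:
  assumes X: "X \<in> carrier_mat n r"
  shows "sorted_wrt (<) Cs \<Longrightarrow> set Cs \<subseteq> {..<n} \<Longrightarrow> sorted_wrt (<) ks \<Longrightarrow> set ks \<subseteq> {..<r} \<Longrightarrow>
    psi n (map (colv X) ks) (basis_of_set n (set Cs)) = complex_of_real (sgnf (length Cs) * pf (Kf X) (map R Cs @ map V ks))"
proof (induction Cs arbitrary: ks)
  case Nil
  then show ?case using amp0[OF X] by simp
next
  case (Cons i Cs)
  have i: "i < n" "i \<notin> set Cs" "\<forall>l\<in>set Cs. i < l" using Cons.prems by auto
  let ?m = "length Cs"
  have "psi n (map (colv X) ks) (basis_of_set n (set (i # Cs))) = an i (psi n (map (colv X) ks)) (basis_of_set n (set Cs))"
    using basis_insert[OF i] by simp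
  also have "\<dots> = (\<Sum>j<length ks. complex_of_real ((-1)^j * X $$ (i, ks!j)) * psi n (map (colv X) (dl j ks)) (basis_of_set n (set Cs)))"
    using R1[OF i(1)] by (simp add: basis_of_set_def dl_map colv_def)
  also have "\<dots> = (\<Sum>j<length ks. complex_of_real ((-1)^j * X $$ (i, ks!j)) * complex_of_real (sgnf ?m * pf (Kf X) (map R Cs @ map V (dl j ks))))"
  proof (rule sum.cong[OF refl])
    fix j assume j: "j \<in> {..<length ks}"
    have "psi n (map (colv X) (dl j ks)) (basis_of_set n (set Cs)) = complex_of_real (sgnf ?m * pf (Kf X) (map R Cs @ map V (dl j ks)))"
      by (rule Cons.IH) (use Cons.prems set_dl[of j ks] in \<open>auto intro: sorted_dl\<close>)
    then show "complex_of_real ((-1)^j * X $$ (i, ks!j)) * psi n (map (colv X) (dl j ks)) (basis_of_set n (set Cs))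
      = complex_of_real ((-1)^j * X $$ (i, ks!j)) * complex_of_real (sgnf ?m * pf (Kf X) (map R Cs @ map V (dl j ks)))" by simp
  qed
  also have "\<dots> = complex_of_real (sgnf (length (i # Cs)) * pf (Kf X) (map R (i # Cs) @ map V ks))"
  proof -
    let ?its = "map R Cs @ map V ks"
    have "pf (Kf X) (R i # ?its) = (\<Sum>j<?m + length ks. (-1)^j * Kf X (R i) (?its ! j) * pf (Kf X) (dl j ?its))"
      by simp
    also have "\<dots> = (\<Sum>b<length ks. (-1)^(?m + b) * Kf X (R i) (?its ! (?m + b)) * pf (Kf X) (dl (?m + b) ?its))"
      unfolding sum_split_add by (simp add: Kf_def nth_append)
    also have "\<dots> = (\<Sum>b<length ks. (-1)^(?m + b) * X $$ (i, ks ! b) * pf (Kf X) (map R Cs @ map V (dl b ks)))"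
      by (rule sum.cong[OF refl]) (simp add: Kf_def nth_append dl_append2 dl_map)
    finally have pfe: "pf (Kf X) (R i # ?its) = \<dots>" .
    have pw: "(-1::real)^m' * (-1)^(m'+b) = (-1)^b" for m' b by (induction m') auto
    have "sgnf (Suc ?m) * pf (Kf X) (R i # ?its) = (\<Sum>b<length ks. sgnf ?m * (((-1)^?m * (-1)^(?m + b)) * (X $$ (i, ks ! b) * pf (Kf X) (map R Cs @ map V (dl b ks)))))"
      unfolding pfe by (simp add: sum_distrib_left mult_ac)
    also have "\<dots> = (\<Sum>b<length ks. (-1)^b * X $$ (i, ks ! b) * (sgnf ?m * pf (Kf X) (map R Cs @ map V (dl b ks))))"
      unfolding pw by (simp add: mult_ac)
    finally have "sgnf (Suc ?m) * pf (Kf X) (R i # ?its) = \<dots>" .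
    then show ?thesis
      unfolding of_real_mult[symmetric] of_real_sum[symmetric] by (simp add: mult_ac)
  qed
  finally show ?case .
qed

lemma pf_map: "pf f (map \<phi> xs) = pf (\<lambda>a b. f (\<phi> a) (\<phi> b)) xs"
proof (induction "length xs" arbitrary: xs rule: less_induct)
  case less
  show ?case
  proof (cases xs)
    case Nil
    then show ?thesis by simp
  next
    case (Cons x xs')
    have "pf f (map \<phi> (dl j xs')) = pf (\<lambda>a b. f (\<phi> a) (\<phi> b)) (dl j xs')" for j
      by (rule less.hyps) (use Cons length_dl_le[of j xs'] in auto)
    then show ?thesis using Cons by (simp add: dl_map[symmetric])
  qed
qed

lemma pf_cong: "(\<And>a b. a \<in> set xs \<Longrightarrow> b \<in> set xs \<Longrightarrow> f a b = g a b) \<Longrightarrow> pf f xs = pf g xs"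
proof (induction "length xs" arbitrary: xs rule: less_induct)
  case less
  show ?case
  proof (cases xs)
    case Nil
    then show ?thesis by simp
  next
    case (Cons x xs')
    have "pf f (dl j xs') = pf g (dl j xs')" for j
      by (rule less.hyps) (use Cons length_dl_le[of j xs'] set_dl[of j xs'] less.prems in auto)
    moreover have "f x (xs'!j) = g x (xs'!j)" if "j < length xs'" for j
      using less.prems Cons that by simp
    ultimately show ?thesis using Cons by simp
  qed
qed

lemma pf_odd: "odd (length xs) \<Longrightarrow> pf f xs = 0"
proof (induction "length xs" arbitrary: xs rule: less_induct)
  case less
  then obtain x xs' where Cons: "xs = x # xs'" by (cases xs) auto
  have "pf f (dl j xs') = 0" if "j < length xs'" for j
    by (rule less.hyps) (use Cons that less.prems in auto)
  then show ?case using Cons by simp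
qed

lemma pick_upt: "j < r \<Longrightarrow> pick {0..<r} j = j"
proof (induction j)
  case 0
  then show ?case by (auto intro!: Least_equality)
next
  case (Suc j)
  then show ?case by (auto intro!: Least_equality)
qed

definition clist :: "nat set \<Rightarrow> nat list" where
  "clist C = map (pick C) [0..<card C]"

lemma clist_props:
  assumes "finite C"
  shows "sorted_wrt (<) (clist C)" "set (clist C) = C" "length (clist C) = card C"
proof -
  show "sorted_wrt (<) (clist C)"
    unfolding clist_def sorted_wrt_iff_nth_less by (auto intro: pick_mono)
  show "length (clist C) = card C" by (simp add: clist_def)
  show "set (clist C) = C"
  proof
    show "set (clist C) \<subseteq> C" unfolding clist_def by (auto intro: pick_in_set)
  next
    show "C \<subseteq> set (clist C)"
    proof
      fix c assume c: "c \<in> C"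
      have "{a \<in> C. a < c} \<subset> C" using c by auto
      then have "card {a \<in> C. a < c} < card C" using assms by (simp add: psubset_card_mono)
      then show "c \<in> set (clist C)" unfolding clist_def using pick_card_in_set[OF c] by force
    qed
  qed
qed

definition items :: "nat set \<Rightarrow> nat \<Rightarrow> item list" where
  "items C r = map R (clist C) @ map V [0..<r]"

lemma prob_eq:
  assumes X: "X \<in> carrier_mat n r" and C: "C \<subseteq> {0..<n}"
  shows "prob_Y X C = (pf (Kf X) (items C r))^2"
proof -
  have fin: "finite C" using C finite_subset by blast
  note cp = clist_props[OF fin]
  have dims: "dim_row X = n" "dim_col X = r" using X by auto
  have lb: "length (basis_of_set n C) = n" by (simp add: basis_of_set_def)
  have "columns_state X (basis_of_set n C) = psi n (map (colv X) [0..<r]) (basis_of_set n C)"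
    unfolding columns_state_def dims using foldr_psi[OF lb, of "colv X" "[0..<r]"] by (simp add: colv_def)
  also have "\<dots> = psi n (map (colv X) [0..<r]) (basis_of_set n (set (clist C)))" using cp by simp
  also have "\<dots> = complex_of_real (sgnf (length (clist C)) * pf (Kf X) (items C r))"
    unfolding items_def by (rule amp[OF X]) (use cp C in auto)
  finally have e: "columns_state X (basis_of_set n C) = \<dots>" .
  show ?thesis unfolding prob_Y_def dims e norm_of_real power2_abs
    by (simp add: power_mult_distrib power2_eq_square sgnf_sq)
qed

lemma block_entries:
  assumes X: "X \<in> carrier_mat n r" and C: "C \<subseteq> {0..<n}"
  defines "N \<equiv> card C + r"
  shows "block_matrix X C \<in> carrier_mat N N"
    "\<And>i j. i < N \<Longrightarrow> j < N \<Longrightarrow> block_matrix X C $$ (i, j) = Kf X (items C r ! i) (items C r ! j)"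
proof -
  have fin: "finite C" using C finite_subset by blast
  note cp = clist_props[OF fin]
  have dims: "dim_row X = n" "dim_col X = r" using X by auto
  define XC where "XC = submatrix X C {0..<r}"
  have c1: "{i. i < n \<and> i \<in> C} = C" using C by auto
  have c2: "{j. j < r \<and> j \<in> {0..<r}} = {0..<r}" by auto
  have dXC: "dim_row XC = card C" "dim_col XC = r"
    unfolding XC_def dim_submatrix dims c1 c2 by auto
  have XCe: "XC $$ (i, j) = X $$ (pick C i, j)" if "i < card C" "j < r" for i j
    unfolding XC_def using that by (subst submatrix_index) (auto simp: dims c1 c2 pick_upt)
  define G where "G = transpose_mat X * X"
  have G: "G \<in> carrier_mat r r" unfolding G_def using X by auto
  have B: "block_matrix X C = four_block_mat (0\<^sub>m (card C) (card C)) XC (- transpose_mat XC) (skew G)"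
    unfolding block_matrix_def XC_def[symmetric] G_def[symmetric] Let_def dXC dims by simp
  have dS: "dim_row (skew G) = r" "dim_col (skew G) = r"
    using G by (auto simp: skew_def triu_def)
  show "block_matrix X C \<in> carrier_mat N N" unfolding B N_def using dXC dS by auto
  have cl: "clist C ! i = pick C i" if "i < card C" for i using that by (simp add: clist_def)
  show "block_matrix X C $$ (i, j) = Kf X (items C r ! i) (items C r ! j)" if ij: "i < N" "j < N" for i j
  proof -
    have it: "items C r ! k = (if k < card C then R (pick C k) else V (k - card C))" if "k < N" for k
      using that cp by (auto simp: items_def nth_append cl N_def)
    show ?thesis
      unfolding B using ij dXC dS G
      by (auto simp: it ij XCe skew_def triu_def Kf_def G_def[symmetric] N_def)
  qed
qed

definition bet :: "nat \<Rightarrow> (nat \<Rightarrow> nat \<Rightarrow> real) \<Rightarrow> (nat \<Rightarrow> real) \<Rightarrow> (nat \<Rightarrow> real) \<Rightarrow> real" where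
  "bet N K u w = (\<Sum>a<N. \<Sum>b<N. u a * K a b * w b)"

definition ev :: "nat \<Rightarrow> nat \<Rightarrow> real" where
  "ev a = (\<lambda>t. if t = a then 1 else 0)"

lemma bet_ev: "a < N \<Longrightarrow> b < N \<Longrightarrow> bet N K (ev a) (ev b) = K a b"
proof -
  have i1: "(if P then (1::real) else 0) * x = (if P then x else 0)" for P x by simp
  have i2: "x * (if P then (1::real) else 0) = (if P then x else 0)" for P x by simp
  assume "a < N" "b < N"
  then show ?thesis unfolding bet_def ev_def by (simp only: i1 i2) simp
qed

lemma bil_bet: assumes sk: "\<And>a b. K a b = - K b a" shows "bil (bet N K)"
  unfolding bil_def
proof (intro conjI allI)
  fix u w c z
  show "bet N K (\<lambda>t. u t + c * w t) z = bet N K u z + c * bet N K w z"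
    unfolding bet_def by (simp add: algebra_simps sum.distrib sum_distrib_left)
next
  fix u w
  have "bet N K w u = (\<Sum>a<N. \<Sum>b<N. w b * K b a * u a)" unfolding bet_def by (rule sum.swap)
  also have "\<dots> = (\<Sum>a<N. \<Sum>b<N. - (u a * K a b * w b))"
  proof (intro sum.cong refl)
    fix a b show "w b * K b a * u a = - (u a * K a b * w b)" using sk[of b a] by simp
  qed
  also have "\<dots> = - bet N K u w" unfolding bet_def by (simp add: sum_negf)
  finally show "bet N K u w = - bet N K w u" by simp
qed

lemma det_eq:
  assumes X: "X \<in> carrier_mat n r" and C: "C \<subseteq> {0..<n}"
  shows "det (block_matrix X C) = (pf (Kf X) (items C r))^2"
proof -
  define N where "N = card C + r"
  note be = block_entries[OF X C]
  have fin: "finite C" using C finite_subset by blast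
  have lenit: "length (items C r) = N" using clist_props[OF fin] by (simp add: items_def N_def)
  define Kn where "Kn = (\<lambda>a b. Kf X (items C r ! a) (items C r ! b))"
  define \<beta> where "\<beta> = bet N Kn"
  define E where "E = map ev [0..<N]"
  have b: "bil \<beta>" unfolding \<beta>_def by (rule bil_bet) (unfold Kn_def, rule Kf_skew)
  have "block_matrix X C = mat N N (\<lambda>(i,j). \<beta> (E!i) (E!j))"
    by (rule eq_matI) (use be in \<open>auto simp: N_def E_def \<beta>_def bet_ev Kn_def\<close>)
  then have "det (block_matrix X C) = dt \<beta> E E" by (simp add: det_dt E_def)
  also have "\<dots> = (pf \<beta> E)^2" by (rule dt_pf[OF b])
  also have "pf \<beta> E = pf (\<lambda>a b. \<beta> (ev a) (ev b)) [0..<N]" unfolding E_def by (rule pf_map)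
  also have "\<dots> = pf Kn [0..<N]" by (rule pf_cong) (simp add: \<beta>_def bet_ev)
  also have "\<dots> = pf (Kf X) (map (\<lambda>a. items C r ! a) [0..<N])" unfolding Kn_def by (rule pf_map[symmetric])
  also have "map (\<lambda>a. items C r ! a) [0..<N] = items C r" using lenit map_nth[of "items C r"] by simp
  finally show ?thesis .
qed

theorem main_aux:
  fixes X :: "real mat" and n r :: nat
  assumes dims: "X \<in> carrier_mat n r"
  shows "(\<forall>C. C \<subseteq> {0..<n} \<longrightarrow> prob_Y X C = det (block_matrix X C))
       \<and> (\<Sum>C | C \<subseteq> {0..<n} \<and> odd (card C + r). prob_Y X C) = 0"
proof
  show "\<forall>C. C \<subseteq> {0..<n} \<longrightarrow> prob_Y X C = det (block_matrix X C)"
    using prob_eq[OF dims] det_eq[OF dims] by simp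
next
  show "(\<Sum>C | C \<subseteq> {0..<n} \<and> odd (card C + r). prob_Y X C) = 0"
  proof (rule sum.neutral, intro ballI)
    fix C assume "C \<in> {C. C \<subseteq> {0..<n} \<and> odd (card C + r)}"
    then have C: "C \<subseteq> {0..<n}" and o: "odd (card C + r)" by auto
    have fin: "finite C" using C finite_subset by blast
    have "length (items C r) = card C + r" using clist_props[OF fin] by (simp add: items_def)
    then have "pf (Kf X) (items C r) = 0" using o by (intro pf_odd) simp
    then show "prob_Y X C = 0" using prob_eq[OF dims C] by simp
  qed
qed

theorem mainTheorem5:
  fixes X :: "real mat" and n r :: nat
  assumes dims: "X \<in> carrier_mat n r"
    and unit_cols: "\<forall>k<r. (\<Sum>i<n. (X $$ (i, k))\<^sup>2) = 1"
    and rank: "vec_space.rank n X = r"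
  shows "(\<forall>C. C \<subseteq> {0..<n} \<longrightarrow> prob_Y X C = det (block_matrix X C))
       \<and> (\<Sum>C | C \<subseteq> {0..<n} \<and> odd (card C + r). prob_Y X C) = 0"
    using main_aux[OF dims] .

end
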